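(* Let $N$ be a phylogenetic network and consider a valid head move of $(u,v)$ from $(x_1,y_1)$ to $(x_2,y_2)$ resulting in $N'$. Suppose $y_1$ is above $x_2$, $y_1\neq x_2$, and $x_2$ is a split node. Then there is a sequence of at most $4$ valid tail moves transforming $N$ into $N'$.
   Context: A (binary) phylogenetic network on a finite label set $X$ ($|X|\ge 2$) is a directed acyclic graph without parallel edges having exactly one root (indegree 0, outdegree 1), exactly $|X|$ leaves (indegree 1, outdegree 0) bijectively labelled by $X$, and all other nodes are either split nodes (indegree 1, outdegree 2) or reticulations (indegree 2, outdegree 1). A node $a$ is above a node $b$ if there is a directed path from $a$ to $b$. Subdividing an edge $(a,b)$ means replacing it by a new node $x$ and edges $(a,x),(x,b)$; suppressing an indegree-1 outdegree-1 node $x$ with parent $a$ and child $b$ means deleting $x$ and its edges and adding $(a,b)$. Head move of $(u,v)$ ($v$ a reticulation) to an edge $f$: delete $(u,v)$, subdivide $f$ with new node $v'$, suppress $v$, add $(u,v')$; "from $(x_1,y_1)$ to $(x_2,y_2)$" means $x_1$ is the other parent and $y_1$ the child of $v$, and $f=(x_2,y_2)$. Tail move of $(u,v)$ ($u$ a split node) to $f$: delete $(u,v)$, subdivide $f$ with new node $u'$, suppress $u$, add $(u',v)$. A move is valid only if the result is a phylogenetic network. *)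

theory Defs
  imports Main
begin

text \<open>A directed graph is given by a node set V and an edge set E (no parallel edges
  by construction).  Leaves are identified with their labels: the leaf set is X.\<close>

definition indeg :: "'v set \<Rightarrow> ('v \<times> 'v) set \<Rightarrow> 'v \<Rightarrow> nat" where
  "indeg V E x = card {y \<in> V. (y, x) \<in> E}"

definition outdeg :: "'v set \<Rightarrow> ('v \<times> 'v) set \<Rightarrow> 'v \<Rightarrow> nat" where
  "outdeg V E x = card {y \<in> V. (x, y) \<in> E}"

definition is_root :: "'v set \<Rightarrow> ('v \<times> 'v) set \<Rightarrow> 'v \<Rightarrow> bool" where
  "is_root V E x \<longleftrightarrow> x \<in> V \<and> indeg V E x = 0 \<and> outdeg V E x = 1"

definition is_leaf :: "'v set \<Rightarrow> ('v \<times> 'v) set \<Rightarrow> 'v \<Rightarrow> bool" where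
  "is_leaf V E x \<longleftrightarrow> x \<in> V \<and> indeg V E x = 1 \<and> outdeg V E x = 0"

definition is_split :: "'v set \<Rightarrow> ('v \<times> 'v) set \<Rightarrow> 'v \<Rightarrow> bool" where
  "is_split V E x \<longleftrightarrow> x \<in> V \<and> indeg V E x = 1 \<and> outdeg V E x = 2"

definition is_retic :: "'v set \<Rightarrow> ('v \<times> 'v) set \<Rightarrow> 'v \<Rightarrow> bool" where
  "is_retic V E x \<longleftrightarrow> x \<in> V \<and> indeg V E x = 2 \<and> outdeg V E x = 1"

definition phylo_net :: "'v set \<Rightarrow> 'v set \<Rightarrow> ('v \<times> 'v) set \<Rightarrow> bool" where
  "phylo_net X V E \<longleftrightarrow>
     finite V \<and> E \<subseteq> V \<times> V \<and> acyclic E \<and> card X \<ge> 2 \<and>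
     card {x \<in> V. is_root V E x} = 1 \<and>
     {x \<in> V. is_leaf V E x} = X \<and>
     (\<forall>x \<in> V. is_root V E x \<or> is_leaf V E x \<or> is_split V E x \<or> is_retic V E x)"

definition above :: "('v \<times> 'v) set \<Rightarrow> 'v \<Rightarrow> 'v \<Rightarrow> bool" where
  "above E a b \<longleftrightarrow> (a, b) \<in> E\<^sup>*"

definition subdivide :: "('v \<times> 'v) set \<Rightarrow> 'v \<times> 'v \<Rightarrow> 'v \<Rightarrow> ('v \<times> 'v) set" where
  "subdivide E f x = (E - {f}) \<union> {(fst f, x), (x, snd f)}"

definition suppress :: "'v set \<Rightarrow> ('v \<times> 'v) set \<Rightarrow> 'v \<Rightarrow> 'v set \<Rightarrow> ('v \<times> 'v) set \<Rightarrow> bool" where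
  "suppress V E x V' E' \<longleftrightarrow> x \<in> V \<and>
     (\<exists>a b. {y \<in> V. (y, x) \<in> E} = {a} \<and> {y \<in> V. (x, y) \<in> E} = {b} \<and>
            V' = V - {x} \<and> E' = (E - {(a, x), (x, b)}) \<union> {(a, b)})"

definition head_move ::
  "'v set \<Rightarrow> 'v set \<Rightarrow> ('v \<times> 'v) set \<Rightarrow> 'v \<Rightarrow> 'v \<Rightarrow> 'v \<Rightarrow> 'v \<Rightarrow> 'v \<Rightarrow> 'v \<Rightarrow> 'v
   \<Rightarrow> 'v set \<Rightarrow> ('v \<times> 'v) set \<Rightarrow> bool" where
  "head_move X V E u v x1 y1 x2 y2 v' V' E' \<longleftrightarrow>
     phylo_net X V E \<and> (u, v) \<in> E \<and> is_retic V E v \<and>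
     (x1, v) \<in> E \<and> x1 \<noteq> u \<and> (v, y1) \<in> E \<and>
     (x2, y2) \<in> E - {(u, v)} \<and> v' \<notin> V \<and>
     (\<exists>E3. suppress (insert v' V) (subdivide (E - {(u, v)}) (x2, y2) v') v V' E3 \<and>
           E' = insert (u, v') E3) \<and>
     phylo_net X V' E'"

definition tail_move ::
  "'v set \<Rightarrow> 'v set \<Rightarrow> ('v \<times> 'v) set \<Rightarrow> 'v \<Rightarrow> 'v \<Rightarrow> 'v \<Rightarrow> 'v \<Rightarrow> 'v
   \<Rightarrow> 'v set \<Rightarrow> ('v \<times> 'v) set \<Rightarrow> bool" where
  "tail_move X V E u v x2 y2 u' V' E' \<longleftrightarrow>
     phylo_net X V E \<and> (u, v) \<in> E \<and> is_split V E u \<and>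
     (x2, y2) \<in> E - {(u, v)} \<and> u' \<notin> V \<and>
     (\<exists>E3. suppress (insert u' V) (subdivide (E - {(u, v)}) (x2, y2) u') u V' E3 \<and>
           E' = insert (u', v) E3) \<and>
     phylo_net X V' E'"

definition tail_step :: "'v set \<Rightarrow> (('v set \<times> ('v \<times> 'v) set) \<times> ('v set \<times> ('v \<times> 'v) set)) set" where
  "tail_step X = {((V, E), (V', E')). \<exists>u v x2 y2 u'. tail_move X V E u v x2 y2 u' V' E'}"

text \<open>Isomorphism of networks on X (fixing the leaves, i.e. preserving labels).\<close>
definition net_iso :: "'v set \<Rightarrow> 'v set \<times> ('v \<times> 'v) set \<Rightarrow> 'v set \<times> ('v \<times> 'v) set \<Rightarrow> bool" where
  "net_iso X N M \<longleftrightarrow> (\<exists>\<phi>. bij_betw \<phi> (fst N) (fst M) \<and>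
      (\<forall>a \<in> fst N. \<forall>b \<in> fst N. (a, b) \<in> snd N \<longleftrightarrow> (\<phi> a, \<phi> b) \<in> snd M) \<and>
      (\<forall>x \<in> X. \<phi> x = x))"

end

theory Submission
  imports Defs
begin

lemma ranks_acyclic:
  fixes r :: "'v \<Rightarrow> nat"
  assumes "\<And>a b. (a, b) \<in> E \<Longrightarrow> r a < r b"
  shows "acyclic E"
proof -
  have "(a, b) \<in> E\<^sup>+ \<Longrightarrow> r a < r b" for a b
    by (induction rule: trancl_induct) (auto dest: assms)
  then show ?thesis unfolding acyclic_def by blast
qed

definition anc :: "('v \<times> 'v) set \<Rightarrow> 'v \<Rightarrow> nat" where
  "anc E x = card {y. (y, x) \<in> E\<^sup>+}"

lemma anc_mono:
  assumes "finite V" "E \<subseteq> V \<times> V" "acyclic E" "(a, b) \<in> E\<^sup>+"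
  shows "anc E a < anc E b"
proof -
  have sub: "{y. (y, a) \<in> E\<^sup>+} \<subseteq> {y. (y, b) \<in> E\<^sup>+}"
    using assms(4) by (auto intro: trancl_trans)
  have "a \<in> {y. (y, b) \<in> E\<^sup>+}" using assms(4) by simp
  moreover have "a \<notin> {y. (y, a) \<in> E\<^sup>+}" using assms(3) unfolding acyclic_def by simp
  ultimately have ps: "{y. (y, a) \<in> E\<^sup>+} \<subset> {y. (y, b) \<in> E\<^sup>+}" using sub by blast
  have "E\<^sup>+ \<subseteq> V \<times> V" using assms(2) trancl_subset_Sigma by blast
  then have "finite {y. (y, b) \<in> E\<^sup>+}" using assms(1)
    by (metis (no_types, lifting) SigmaD1 finite_subset mem_Collect_eq subsetI subset_iff)
  then show ?thesis unfolding anc_def using ps psubset_card_mono by blast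
qed

lemma card_swap:
  assumes "finite A" "c \<in> A" "n \<notin> A"
  shows "card (insert n (A - {c})) = card A"
  using assms by (simp add: card_Diff_singleton) (metis One_nat_def Suc_pred card_gt_0_iff empty_iff)

lemma net_transfer:
  assumes pn: "phylo_net X V E" and V': "V' = insert u' V - {u}"
    and sub: "E' \<subseteq> V' \<times> V'" and ac: "acyclic E'"
    and su: "is_split V E u" and sn: "is_split V' E' u'" and nu: "u' \<notin> V"
    and deg: "\<And>x. x \<in> V' \<Longrightarrow> x \<noteq> u' \<Longrightarrow> indeg V' E' x = indeg V E x \<and> outdeg V' E' x = outdeg V E x"
  shows "phylo_net X V' E'"
proof -
  have fin: "finite V'" using pn V' unfolding phylo_net_def by simp
  have uV: "u \<in> V" using su unfolding is_split_def by simp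
  have iff: "x \<in> V' \<and> x \<noteq> u' \<longleftrightarrow> x \<in> V \<and> x \<noteq> u" for x using V' nu by auto
  have r: "{x \<in> V'. is_root V' E' x} = {x \<in> V. is_root V E x}"
  proof -
    have "is_root V' E' x \<longleftrightarrow> is_root V E x" if "x \<in> V'" "x \<noteq> u'" for x
      using deg[OF that] that iff unfolding is_root_def by auto
    moreover have "\<not> is_root V' E' u'" using sn unfolding is_root_def is_split_def by simp
    moreover have "\<not> is_root V E u" using su unfolding is_root_def is_split_def by simp
    ultimately show ?thesis using iff by (smt (verit) Collect_cong)
  qed
  have l: "{x \<in> V'. is_leaf V' E' x} = {x \<in> V. is_leaf V E x}"
  proof -
    have "is_leaf V' E' x \<longleftrightarrow> is_leaf V E x" if "x \<in> V'" "x \<noteq> u'" for x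
      using deg[OF that] that iff unfolding is_leaf_def by auto
    moreover have "\<not> is_leaf V' E' u'" using sn unfolding is_leaf_def is_split_def by simp
    moreover have "\<not> is_leaf V E u" using su unfolding is_leaf_def is_split_def by simp
    ultimately show ?thesis using iff by (smt (verit) Collect_cong)
  qed
  have t: "is_root V' E' x \<or> is_leaf V' E' x \<or> is_split V' E' x \<or> is_retic V' E' x" if "x \<in> V'" for x
  proof (cases "x = u'")
    case True then show ?thesis using sn by simp
  next
    case False
    then have "x \<in> V" using that iff by blast
    then have "is_root V E x \<or> is_leaf V E x \<or> is_split V E x \<or> is_retic V E x"
      using pn unfolding phylo_net_def by blast
    then show ?thesis using deg[OF that False] that
      unfolding is_root_def is_leaf_def is_split_def is_retic_def by auto
  qed
  show ?thesis using pn fin sub ac r l t unfolding phylo_net_def by auto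
qed

definition tmE :: "('v \<times> 'v) set \<Rightarrow> 'v \<Rightarrow> 'v \<Rightarrow> 'v \<Rightarrow> 'v \<Rightarrow> 'v \<Rightarrow> 'v \<Rightarrow> 'v \<Rightarrow> ('v \<times> 'v) set" where
  "tmE E u v w p a b u' = (E - {(p, u), (u, w), (u, v), (a, b)}) \<union> {(p, w), (a, u'), (u', b), (u', v)}"

lemma TM:
  assumes pn: "phylo_net X V E"
    and pu: "{y \<in> V. (y, u) \<in> E} = {p}" and su: "{y \<in> V. (u, y) \<in> E} = {v, w}" and vw: "v \<noteq> w"
    and ab: "(a, b) \<in> E" and ab1: "(a, b) \<noteq> (p, u)" and ab2: "(a, b) \<noteq> (u, v)" and ab3: "(a, b) \<noteq> (u, w)"
    and pw: "(p, w) \<notin> E" and bv: "b \<noteq> v" and nu: "u' \<notin> V"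
    and ac: "acyclic (tmE E u v w p a b u')"
  shows "tail_move X V E u v a b u' (insert u' V - {u}) (tmE E u v w p a b u')"
    and "{y \<in> insert u' V - {u}. (y, u') \<in> tmE E u v w p a b u'} = {a}"
    and "{y \<in> insert u' V - {u}. (u', y) \<in> tmE E u v w p a b u'} = {b, v}"
proof -
  define V' where "V' = insert u' V - {u}"
  define E' where "E' = tmE E u v w p a b u'"
  have EV: "E \<subseteq> V \<times> V" and fin: "finite V" and acE: "acyclic E" using pn unfolding phylo_net_def by auto
  have noloop: "(x, x) \<notin> E" for x using acE unfolding acyclic_def by blast
  have nocyc2: "(x, y) \<in> E \<Longrightarrow> (y, x) \<notin> E" for x y
    using acE unfolding acyclic_def by (meson trancl.trancl_into_trancl r_into_trancl')
  have pV: "p \<in> V" and puE: "(p, u) \<in> E" using pu by auto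
  have vV: "v \<in> V" and uvE: "(u, v) \<in> E" and wV: "w \<in> V" and uwE: "(u, w) \<in> E" using su by auto
  have uV: "u \<in> V" using EV puE by auto
  have predu: "(y, u) \<in> E \<Longrightarrow> y = p" for y using pu EV by blast
  have succu: "(u, y) \<in> E \<Longrightarrow> y = v \<or> y = w" for y using su EV by blast
  have aV: "a \<in> V" and bV: "b \<in> V" using ab EV by auto
  have pu_ne: "p \<noteq> u" using puE noloop by blast
  have vu_ne: "v \<noteq> u" using uvE noloop by blast
  have wu_ne: "w \<noteq> u" using uwE noloop by blast
  have au_ne: "a \<noteq> u" using ab ab2 ab3 succu by blast
  have bu_ne: "b \<noteq> u" using ab ab1 predu by blast
  have pw_ne: "p \<noteq> w" using puE uwE nocyc2 by blast
  have pv_ne: "p \<noteq> v" using puE uvE nocyc2 by blast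
  have nV: "x \<in> V \<Longrightarrow> x \<noteq> u'" for x using nu by blast
  have uu': "u' \<noteq> u" using nu uV by blast
  have u'E1: "(u', y) \<notin> E" and u'E2: "(y, u') \<notin> E" for y using EV nu by auto
  have E'iff: "(y, x) \<in> E' \<longleftrightarrow> ((y, x) \<in> E \<and> (y, x) \<noteq> (p, u) \<and> (y, x) \<noteq> (u, w) \<and> (y, x) \<noteq> (u, v) \<and> (y, x) \<noteq> (a, b))
     \<or> (y, x) = (p, w) \<or> (y, x) = (a, u') \<or> (y, x) = (u', b) \<or> (y, x) = (u', v)" for x y
    unfolding E'_def tmE_def by auto
  have sub: "E' \<subseteq> V' \<times> V'"
  proof
    fix e assume "e \<in> E'"
    then obtain x y where e: "e = (x, y)" "(x, y) \<in> E'" by (cases e) auto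
    show "e \<in> V' \<times> V'"
      using e(2) unfolding E'iff V'_def using EV predu succu pV vV wV aV bV pu_ne vu_ne wu_ne au_ne bu_ne e(1) uu'
      by auto
  qed
  have pu': "{y \<in> V'. (y, u') \<in> E'} = {a}"
    using aV au_ne nV bV vV wV pV u'E1 u'E2 unfolding V'_def E'iff by auto
  have su': "{y \<in> V'. (u', y) \<in> E'} = {b, v}"
    using aV bu_ne vu_ne nV bV vV wV pV EV u'E1 u'E2 unfolding V'_def E'iff by auto
  have sn: "is_split V' E' u'" unfolding is_split_def indeg_def outdeg_def pu' su' using bv uu'
    by (simp add: V'_def)
  have ssu: "is_split V E u" unfolding is_split_def indeg_def outdeg_def pu su using vw uV by simp
  have deg: "indeg V' E' x = indeg V E x \<and> outdeg V' E' x = outdeg V E x" if x: "x \<in> V'" "x \<noteq> u'" for x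
  proof -
    have xV: "x \<in> V" and xu: "x \<noteq> u" using x unfolding V'_def by auto
    define P where "P = {y \<in> V. (y, x) \<in> E}"
    define S where "S = {y \<in> V. (x, y) \<in> E}"
    have fP: "finite P" and fS: "finite S" using fin unfolding P_def S_def by auto
    have memP: "y \<in> {y \<in> V'. (y, x) \<in> E'} \<longleftrightarrow>
       (y \<in> P \<and> \<not> (y = u \<and> (x = w \<or> x = v)) \<and> \<not> (y = a \<and> x = b)) \<or> (y = p \<and> x = w) \<or> (y = u' \<and> (x = b \<or> x = v))" for y
      unfolding P_def V'_def E'iff using xu x(2) EV pV pu_ne nV succu uu' by auto
    have memS: "y \<in> {y \<in> V'. (x, y) \<in> E'} \<longleftrightarrow>
       (y \<in> S \<and> \<not> (y = u \<and> x = p) \<and> \<not> (y = b \<and> x = a)) \<or> (y = w \<and> x = p) \<or> (y = u' \<and> x = a)" for y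
      unfolding S_def V'_def E'iff using xu x(2) EV wV wu_ne nV predu uu' by auto
    have uPv: "x = v \<Longrightarrow> u \<in> P" "x = w \<Longrightarrow> u \<in> P" using uvE uwE uV unfolding P_def by auto
    have aPb: "x = b \<Longrightarrow> a \<in> P" using ab aV unfolding P_def by auto
    have u'P: "u' \<notin> P" using nu unfolding P_def by auto
    have pPw: "x = w \<Longrightarrow> p \<notin> P" using pw unfolding P_def by auto
    have cP: "card {y \<in> V'. (y, x) \<in> E'} = card P"
    proof -
      consider "x = v" | "x = w" "x = b" | "x = w" "x \<noteq> b" | "x = b" "x \<noteq> w" "x \<noteq> v" | "x \<noteq> v" "x \<noteq> w" "x \<noteq> b"
        by blast
      then show ?thesis
      proof cases
        case 1
        then have "{y \<in> V'. (y, x) \<in> E'} = insert u' (P - {u})" using bv vw unfolding set_eq_iff memP by auto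
        then show ?thesis using card_swap[OF fP uPv(1)[OF 1] u'P] by simp
      next
        case 2
        then have e: "{y \<in> V'. (y, x) \<in> E'} = insert u' (insert p (P - {u}) - {a})" using bv vw au_ne pw ab unfolding set_eq_iff memP by auto
        have "card (insert p (P - {u})) = card P" using card_swap[OF fP uPv(2)[OF 2(1)] pPw[OF 2(1)]] .
        moreover have "card (insert u' (insert p (P - {u}) - {a})) = card (insert p (P - {u}))"
        proof (rule card_swap)
          show "finite (insert p (P - {u}))" using fP by simp
          show "a \<in> insert p (P - {u})" using aPb[OF 2(2)] au_ne by simp
          show "u' \<notin> insert p (P - {u})" using u'P pV nV by auto
        qed
        ultimately show ?thesis using e by simp
      next
        case 3
        then have "{y \<in> V'. (y, x) \<in> E'} = insert p (P - {u})" using bv vw unfolding set_eq_iff memP by auto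
        then show ?thesis using card_swap[OF fP uPv(2)[OF 3(1)] pPw[OF 3(1)]] by simp
      next
        case 4
        then have "{y \<in> V'. (y, x) \<in> E'} = insert u' (P - {a})" using bv vw unfolding set_eq_iff memP by auto
        then show ?thesis using card_swap[OF fP aPb[OF 4(1)] u'P] by simp
      next
        case 5
        then have "{y \<in> V'. (y, x) \<in> E'} = P" unfolding set_eq_iff memP by auto
        then show ?thesis by simp
      qed
    qed
    have uSp: "x = p \<Longrightarrow> u \<in> S" using puE uV unfolding S_def by auto
    have bSa: "x = a \<Longrightarrow> b \<in> S" using ab bV unfolding S_def by auto
    have u'S: "u' \<notin> S" using nu unfolding S_def by auto
    have wSp: "x = p \<Longrightarrow> w \<notin> S" using pw unfolding S_def by auto
    have cS: "card {y \<in> V'. (x, y) \<in> E'} = card S"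
    proof -
      consider "x = p" "x = a" | "x = p" "x \<noteq> a" | "x = a" "x \<noteq> p" | "x \<noteq> p" "x \<noteq> a"
        by blast
      then show ?thesis
      proof cases
        case 1
        then have e: "{y \<in> V'. (x, y) \<in> E'} = insert u' (insert w (S - {u}) - {b})" using bu_ne pw ab unfolding set_eq_iff memS by auto
        have "card (insert w (S - {u})) = card S" using card_swap[OF fS uSp[OF 1(1)] wSp[OF 1(1)]] .
        moreover have "card (insert u' (insert w (S - {u}) - {b})) = card (insert w (S - {u}))"
        proof (rule card_swap)
          show "finite (insert w (S - {u}))" using fS by simp
          show "b \<in> insert w (S - {u})" using bSa[OF 1(2)] bu_ne by simp
          show "u' \<notin> insert w (S - {u})" using u'S wV nV by auto
        qed
        ultimately show ?thesis using e by simp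
      next
        case 2
        then have "{y \<in> V'. (x, y) \<in> E'} = insert w (S - {u})" unfolding set_eq_iff memS by auto
        then show ?thesis using card_swap[OF fS uSp[OF 2(1)] wSp[OF 2(1)]] by simp
      next
        case 3
        then have "{y \<in> V'. (x, y) \<in> E'} = insert u' (S - {b})" unfolding set_eq_iff memS by auto
        then show ?thesis using card_swap[OF fS bSa[OF 3(1)] u'S] by simp
      next
        case 4
        then have "{y \<in> V'. (x, y) \<in> E'} = S" unfolding set_eq_iff memS by auto
        then show ?thesis by simp
      qed
    qed
    show ?thesis unfolding indeg_def outdeg_def using cP cS P_def S_def by simp
  qed
  have pnew: "phylo_net X V' E'"
    using net_transfer[OF pn V'_def sub _ ssu sn nu deg] ac unfolding E'_def by blast
  define Es where "Es = subdivide (E - {(u, v)}) (a, b) u'"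
  have Esiff: "(y, x) \<in> Es \<longleftrightarrow> ((y, x) \<in> E \<and> (y, x) \<noteq> (u, v) \<and> (y, x) \<noteq> (a, b)) \<or> (y, x) = (a, u') \<or> (y, x) = (u', b)" for x y
    unfolding Es_def subdivide_def by auto
  have s1: "{y \<in> insert u' V. (y, u) \<in> Es} = {p}"
    unfolding set_eq_iff Esiff using puE pV ab1 uu' bu_ne pu_ne by (auto dest: predu)
  have s2: "{y \<in> insert u' V. (u, y) \<in> Es} = {w}"
    unfolding set_eq_iff Esiff using uwE wV ab3 uu' au_ne vw by (auto dest: succu)
  have sup: "suppress (insert u' V) Es u V' ((Es - {(p, u), (u, w)}) \<union> {(p, w)})"
    unfolding suppress_def V'_def using uV s1 s2 by blast
  have "E' = insert (u', v) ((Es - {(p, u), (u, w)}) \<union> {(p, w)})"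
  proof -
    have "(y, x) \<in> E' \<longleftrightarrow> (y, x) \<in> insert (u', v) ((Es - {(p, u), (u, w)}) \<union> {(p, w)})" for y x
      unfolding E'iff using uu' nV pV wV by (auto simp: Esiff)
    then show ?thesis by auto
  qed
  then show "tail_move X V E u v a b u' (insert u' V - {u}) (tmE E u v w p a b u')"
    unfolding tail_move_def using pn uvE ssu ab ab2 nu sup pnew unfolding V'_def E'_def Es_def by blast
  show "{y \<in> insert u' V - {u}. (y, u') \<in> tmE E u v w p a b u'} = {a}" using pu' unfolding V'_def E'_def .
  show "{y \<in> insert u' V - {u}. (u', y) \<in> tmE E u v w p a b u'} = {b, v}" using su' unfolding V'_def E'_def .
qed

lemma rename_deg:
  assumes inj: "inj_on f V" and EV: "E \<subseteq> V \<times> V" and xV: "x \<in> V"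
  shows "indeg (f ` V) (map_prod f f ` E) (f x) = indeg V E x"
    and "outdeg (f ` V) (map_prod f f ` E) (f x) = outdeg V E x"
proof -
  have key: "(f a, f b) \<in> map_prod f f ` E \<longleftrightarrow> (a, b) \<in> E" if "a \<in> V" "b \<in> V" for a b
  proof
    assume "(f a, f b) \<in> map_prod f f ` E"
    then obtain c d where cd: "(c, d) \<in> E" "f c = f a" "f d = f b" by auto
    have "c \<in> V" "d \<in> V" using cd(1) EV by auto
    then have "c = a" "d = b" using inj_onD[OF inj cd(2)] inj_onD[OF inj cd(3)] that by auto
    then show "(a, b) \<in> E" using cd by simp
  qed (auto simp del: map_prod_simp)
  have "{y \<in> f ` V. (y, f x) \<in> map_prod f f ` E} = f ` {y \<in> V. (y, x) \<in> E}"
  proof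
    show "{y \<in> f ` V. (y, f x) \<in> map_prod f f ` E} \<subseteq> f ` {y \<in> V. (y, x) \<in> E}"
    proof
      fix y assume "y \<in> {y \<in> f ` V. (y, f x) \<in> map_prod f f ` E}"
      then have y1: "y \<in> f ` V" and y2: "(y, f x) \<in> map_prod f f ` E" by blast+
      then obtain c where c: "c \<in> V" "y = f c" by blast
      with y2 have "(f c, f x) \<in> map_prod f f ` E" by simp
      then have "(c, x) \<in> E" using key[OF c(1) xV] by simp
      then show "y \<in> f ` {y \<in> V. (y, x) \<in> E}" using c by blast
    qed
  qed auto
  moreover have "inj_on f {y \<in> V. (y, x) \<in> E}" using inj by (rule inj_on_subset) auto
  ultimately show "indeg (f ` V) (map_prod f f ` E) (f x) = indeg V E x"
    unfolding indeg_def by (simp add: card_image)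
  have "{y \<in> f ` V. (f x, y) \<in> map_prod f f ` E} = f ` {y \<in> V. (x, y) \<in> E}"
  proof
    show "{y \<in> f ` V. (f x, y) \<in> map_prod f f ` E} \<subseteq> f ` {y \<in> V. (x, y) \<in> E}"
    proof
      fix y assume "y \<in> {y \<in> f ` V. (f x, y) \<in> map_prod f f ` E}"
      then have y1: "y \<in> f ` V" and y2: "(f x, y) \<in> map_prod f f ` E" by blast+
      then obtain c where c: "c \<in> V" "y = f c" by blast
      with y2 have "(f x, f c) \<in> map_prod f f ` E" by simp
      then have "(x, c) \<in> E" using key[OF xV c(1)] by simp
      then show "y \<in> f ` {y \<in> V. (x, y) \<in> E}" using c by blast
    qed
  qed auto
  moreover have "inj_on f {y \<in> V. (x, y) \<in> E}" using inj by (rule inj_on_subset) auto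
  ultimately show "outdeg (f ` V) (map_prod f f ` E) (f x) = outdeg V E x"
    unfolding outdeg_def by (simp add: card_image)
qed

lemma phylo_rename:
  assumes pn: "phylo_net X V E" and inj: "inj_on f V" and fx: "\<And>x. x \<in> X \<Longrightarrow> f x = x"
  shows "phylo_net X (f ` V) (map_prod f f ` E)"
proof -
  have EV: "E \<subseteq> V \<times> V" and fin: "finite V" and acE: "acyclic E" using pn unfolding phylo_net_def by auto
  have deg: "indeg (f ` V) (map_prod f f ` E) (f x) = indeg V E x"
     "outdeg (f ` V) (map_prod f f ` E) (f x) = outdeg V E x" if "x \<in> V" for x
    using rename_deg[OF inj EV that] by auto
  have sub: "map_prod f f ` E \<subseteq> f ` V \<times> f ` V" using EV by auto
  have ac: "acyclic (map_prod f f ` E)"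
  proof (rule ranks_acyclic[where r = "\<lambda>z. anc E (inv_into V f z)"])
    fix a b assume "(a, b) \<in> map_prod f f ` E"
    then obtain c d where cd: "(c, d) \<in> E" "a = f c" "b = f d" by auto
    have "c \<in> V" "d \<in> V" using cd EV by auto
    then have "inv_into V f a = c" "inv_into V f b = d" using cd inj by (simp_all add: inv_into_f_f)
    moreover have "anc E c < anc E d" using anc_mono[OF fin EV acE r_into_trancl[OF cd(1)]] .
    ultimately show "anc E (inv_into V f a) < anc E (inv_into V f b)" by simp
  qed
  have eqv: "(is_root (f ` V) (map_prod f f ` E) (f x) \<longleftrightarrow> is_root V E x) \<and>
             (is_leaf (f ` V) (map_prod f f ` E) (f x) \<longleftrightarrow> is_leaf V E x) \<and>
             (is_split (f ` V) (map_prod f f ` E) (f x) \<longleftrightarrow> is_split V E x) \<and>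
             (is_retic (f ` V) (map_prod f f ` E) (f x) \<longleftrightarrow> is_retic V E x)" if "x \<in> V" for x
    unfolding is_root_def is_leaf_def is_split_def is_retic_def using deg[OF that] that by simp
  have g: "{z \<in> f ` V. Q z} = f ` {x \<in> V. Q (f x)}" for Q by blast
  have roots: "{z \<in> f ` V. is_root (f ` V) (map_prod f f ` E) z} = f ` {x \<in> V. is_root V E x}"
    unfolding g using eqv by (metis (no_types, lifting) Collect_cong)
  have leaves: "{z \<in> f ` V. is_leaf (f ` V) (map_prod f f ` E) z} = f ` {x \<in> V. is_leaf V E x}"
    unfolding g using eqv by (metis (no_types, lifting) Collect_cong)
  have c1: "card (f ` {x \<in> V. is_root V E x}) = card {x \<in> V. is_root V E x}"
    using inj by (intro card_image) (rule inj_on_subset, auto)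
  have fX: "f ` X = X" using fx by auto
  have ty: "\<forall>z \<in> f ` V. is_root (f ` V) (map_prod f f ` E) z \<or> is_leaf (f ` V) (map_prod f f ` E) z \<or>
      is_split (f ` V) (map_prod f f ` E) z \<or> is_retic (f ` V) (map_prod f f ` E) z"
  proof
    fix z assume "z \<in> f ` V"
    then obtain x where x: "x \<in> V" "z = f x" by blast
    then have "is_root V E x \<or> is_leaf V E x \<or> is_split V E x \<or> is_retic V E x"
      using pn unfolding phylo_net_def by simp
    then show "is_root (f ` V) (map_prod f f ` E) z \<or> is_leaf (f ` V) (map_prod f f ` E) z \<or>
      is_split (f ` V) (map_prod f f ` E) z \<or> is_retic (f ` V) (map_prod f f ` E) z"
      using eqv[OF x(1)] x(2) by blast
  qed
  have "card {x \<in> V. is_root V E x} = 1" "{x \<in> V. is_leaf V E x} = X" "card X \<ge> 2"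
    using pn unfolding phylo_net_def by auto
  then show ?thesis unfolding phylo_net_def using fin sub ac roots leaves c1 fX ty by simp
qed

lemma iso_rename:
  assumes inj: "inj_on f V" and fx: "\<And>x. x \<in> X \<Longrightarrow> f x = x" and XV: "X \<subseteq> V" and EV: "E \<subseteq> V \<times> V"
  shows "net_iso X (f ` V, map_prod f f ` E) (V, E)"
  unfolding net_iso_def fst_conv snd_conv
proof (intro exI[of _ "inv_into V f"] conjI ballI)
  show "bij_betw (inv_into V f) (f ` V) V" using inj by (rule bij_betw_inv_into[OF inj_on_imp_bij_betw])
  fix x assume "x \<in> X"
  then show "inv_into V f x = x" using fx XV inj by (metis inv_into_f_f subsetD)
next
  fix a b assume ab: "a \<in> f ` V" "b \<in> f ` V"
  then obtain c d where cd: "c \<in> V" "d \<in> V" "a = f c" "b = f d" by auto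
  then have ic: "inv_into V f a = c" "inv_into V f b = d" using inj by (simp_all add: inv_into_f_f)
  show "(a, b) \<in> map_prod f f ` E \<longleftrightarrow> (inv_into V f a, inv_into V f b) \<in> E"
  proof
    assume "(a, b) \<in> map_prod f f ` E"
    then obtain c' d' where cd': "(c', d') \<in> E" "a = f c'" "b = f d'" by auto
    have "c' \<in> V" "d' \<in> V" using cd'(1) EV by auto
    moreover have "f c' = f c" "f d' = f d" using cd cd' by simp_all
    ultimately have "c' = c" "d' = d" using inj_onD[OF inj] cd by auto
    then show "(inv_into V f a, inv_into V f b) \<in> E" using ic cd' by simp
  next
    assume "(inv_into V f a, inv_into V f b) \<in> E"
    then have "(c, d) \<in> E" using ic by simp
    then have "map_prod f f (c, d) \<in> map_prod f f ` E" by (rule imageI)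
    then show "(a, b) \<in> map_prod f f ` E" using cd by simp
  qed
qed

lemma TM2:
  assumes pn: "phylo_net X V E"
    and pu: "{y \<in> V. (y, u) \<in> E} = {p}" and su: "{y \<in> V. (u, y) \<in> E} = {v, w}" and vw: "v \<noteq> w"
    and ab: "(a, b) \<in> E" and ab1: "(a, b) \<noteq> (p, u)" and ab2: "(a, b) \<noteq> (u, v)" and ab3: "(a, b) \<noteq> (u, w)"
    and nu: "u' \<notin> V"
    and pnew: "phylo_net X (insert u' V - {u}) (tmE E u v w p a b u')"
  shows "tail_move X V E u v a b u' (insert u' V - {u}) (tmE E u v w p a b u')"
proof -
  have EV: "E \<subseteq> V \<times> V" and acE: "acyclic E" using pn unfolding phylo_net_def by auto
  have noloop: "(x, x) \<notin> E" for x using acE unfolding acyclic_def by blast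
  have pV: "p \<in> V" and puE: "(p, u) \<in> E" using pu by auto
  have vV: "v \<in> V" and uvE: "(u, v) \<in> E" and wV: "w \<in> V" and uwE: "(u, w) \<in> E" using su by auto
  have uV: "u \<in> V" using EV puE by auto
  have predu: "(y, u) \<in> E \<Longrightarrow> y = p" for y using pu EV by blast
  have succu: "(u, y) \<in> E \<Longrightarrow> y = v \<or> y = w" for y using su EV by blast
  have au_ne: "a \<noteq> u" using ab ab2 ab3 succu by blast
  have bu_ne: "b \<noteq> u" using ab ab1 predu by blast
  have pu_ne: "p \<noteq> u" using puE noloop by blast
  have nV: "x \<in> V \<Longrightarrow> x \<noteq> u'" for x using nu by blast
  have uu': "u' \<noteq> u" using nu uV by blast
  have ssu: "is_split V E u" unfolding is_split_def indeg_def outdeg_def pu su using vw uV by simp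
  define Es where "Es = subdivide (E - {(u, v)}) (a, b) u'"
  have Esiff: "(y, x) \<in> Es \<longleftrightarrow> ((y, x) \<in> E \<and> (y, x) \<noteq> (u, v) \<and> (y, x) \<noteq> (a, b)) \<or> (y, x) = (a, u') \<or> (y, x) = (u', b)" for x y
    unfolding Es_def subdivide_def by auto
  have s1: "{y \<in> insert u' V. (y, u) \<in> Es} = {p}"
    unfolding set_eq_iff Esiff using puE pV ab1 uu' bu_ne pu_ne by (auto dest: predu)
  have s2: "{y \<in> insert u' V. (u, y) \<in> Es} = {w}"
    unfolding set_eq_iff Esiff using uwE wV ab3 uu' au_ne vw by (auto dest: succu)
  have sup: "suppress (insert u' V) Es u (insert u' V - {u}) ((Es - {(p, u), (u, w)}) \<union> {(p, w)})"
    unfolding suppress_def using uV s1 s2 by blast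
  have "tmE E u v w p a b u' = insert (u', v) ((Es - {(p, u), (u, w)}) \<union> {(p, w)})"
  proof -
    have "(y, x) \<in> tmE E u v w p a b u' \<longleftrightarrow> (y, x) \<in> insert (u', v) ((Es - {(p, u), (u, w)}) \<union> {(p, w)})" for y x
      unfolding tmE_def using uu' nV pV wV by (auto simp: Esiff)
    then show ?thesis by auto
  qed
  then show ?thesis
    unfolding tail_move_def using pn uvE ssu ab ab2 nu sup pnew unfolding Es_def by blast
qed




lemma card1_eq: "card A = 1 \<Longrightarrow> a \<in> A \<Longrightarrow> A = {a}"
  by (metis card_1_singletonE singletonD)

lemma card2_eq:
  assumes "finite A" "card A = 2" "a \<in> A" "b \<in> A" "a \<noteq> b" shows "A = {a, b}"
proof -
  have "{a, b} \<subseteq> A" "card {a, b} = card A" using assms by auto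
  then show ?thesis using card_subset_eq[OF assms(1)] by blast
qed

lemma card2_obtain:
  assumes "card A = 2" "a \<in> A" shows "\<exists>b. b \<noteq> a \<and> A = {a, b}"
proof -
  obtain x y where xy: "A = {x, y}" "x \<noteq> y" using assms(1) unfolding card_2_iff by blast
  then have "a = x \<or> a = y" using assms(2) by simp
  then show ?thesis
  proof
    assume "a = x" then show ?thesis using xy by (intro exI[of _ y]) simp
  next
    assume "a = y" then have "A = {a, x} \<and> x \<noteq> a" using xy by (simp add: insert_commute)
    then show ?thesis by blast
  qed
qed

lemma pair_set_eqI: "(\<And>a b. (a, b) \<in> A \<longleftrightarrow> (a, b) \<in> B) \<Longrightarrow> A = B"
  by (rule set_eqI) (metis surj_pair)

lemma tmE_sub: "tmE F u v w p a b u' \<subseteq> F \<union> {(p, w), (a, u'), (u', b), (u', v)}"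
  unfolding tmE_def by blast

lemma sub_chain: "A \<subseteq> B \<union> C \<Longrightarrow> B \<subseteq> E \<union> D \<Longrightarrow> C \<subseteq> D \<Longrightarrow> A \<subseteq> E \<union> D"
  by blast

lemma tm_pn: "tail_move X V E u v a b u' V' E' \<Longrightarrow> phylo_net X V' E'"
  unfolding tail_move_def by (elim conjE)

lemma acyc_by:
  fixes r :: "'v \<Rightarrow> nat"
  assumes "F \<subseteq> E \<union> N" "\<And>a b. (a, b) \<in> E \<Longrightarrow> r a < r b" "\<And>a b. (a, b) \<in> N \<Longrightarrow> r a < r b"
  shows "acyclic F"
  by (rule ranks_acyclic[of F r]) (use assms in blast)

lemma relpow3: "(a, b) \<in> R \<Longrightarrow> (b, c) \<in> R \<Longrightarrow> (c, d) \<in> R \<Longrightarrow> (a, d) \<in> R ^^ 3"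
  by (metis relpow_1 relpow_Suc_I numeral_3_eq_3 One_nat_def)

lemma inv_map_iff:
  assumes "\<And>x. g (g x) = x"
  shows "(a, b) \<in> map_prod g g ` F \<longleftrightarrow> (g a, g b) \<in> F"
proof
  assume "(a, b) \<in> map_prod g g ` F"
  then obtain c d where "(c, d) \<in> F" "a = g c" "b = g d" by auto
  then show "(g a, g b) \<in> F" using assms by simp
next
  assume "(g a, g b) \<in> F"
  then have "map_prod g g (g a, g b) \<in> map_prod g g ` F" by (rule imageI)
  then show "(a, b) \<in> map_prod g g ` F" using assms by simp
qed

lemma relpow2: "(a, b) \<in> R \<Longrightarrow> (b, c) \<in> R \<Longrightarrow> (a, c) \<in> R ^^ 2"
  by (metis relpow_1 relpow_Suc_I numeral_2_eq_2 One_nat_def)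

lemma relpow4: "(a, b) \<in> R \<Longrightarrow> (b, c) \<in> R \<Longrightarrow> (c, d) \<in> R \<Longrightarrow> (d, e) \<in> R \<Longrightarrow> (a, e) \<in> R ^^ 4"
proof -
  assume "(a, b) \<in> R" "(b, c) \<in> R" "(c, d) \<in> R" "(d, e) \<in> R"
  then have "(a, e) \<in> R ^^ Suc (Suc (Suc (Suc 0)))" by (metis relpow_0_I relpow_Suc_I)
  then show ?thesis by (simp add: numeral_eq_Suc)
qed

lemma split_of_two:
  assumes pn: "phylo_net X V E" and "x \<in> V" "(x, a) \<in> E" "(x, b) \<in> E" "a \<noteq> b"
  shows "is_split V E x" "{y \<in> V. (x, y) \<in> E} = {a, b}"
proof -
  have EV: "E \<subseteq> V \<times> V" and fin: "finite V" using pn unfolding phylo_net_def by auto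
  have ab: "a \<in> {y \<in> V. (x, y) \<in> E}" "b \<in> {y \<in> V. (x, y) \<in> E}" using assms EV by auto
  have fin2: "finite {y \<in> V. (x, y) \<in> E}" using fin by simp
  have "card {a, b} \<le> card {y \<in> V. (x, y) \<in> E}" using ab fin2 by (intro card_mono) auto
  then have ge: "outdeg V E x \<ge> 2" unfolding outdeg_def using assms(5) by simp
  have "is_root V E x \<or> is_leaf V E x \<or> is_split V E x \<or> is_retic V E x" using pn assms(2) unfolding phylo_net_def by blast
  then show sp: "is_split V E x" using ge unfolding is_root_def is_leaf_def is_retic_def by auto
  show "{y \<in> V. (x, y) \<in> E} = {a, b}"
    using card2_eq[OF fin2 _ ab assms(5)] sp unfolding is_split_def outdeg_def by simp
qed

lemma retic_of_two:
  assumes pn: "phylo_net X V E" and "x \<in> V" "(a, x) \<in> E" "(b, x) \<in> E" "a \<noteq> b"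
  shows "is_retic V E x" "{y \<in> V. (y, x) \<in> E} = {a, b}"
proof -
  have EV: "E \<subseteq> V \<times> V" and fin: "finite V" using pn unfolding phylo_net_def by auto
  have ab: "a \<in> {y \<in> V. (y, x) \<in> E}" "b \<in> {y \<in> V. (y, x) \<in> E}" using assms EV by auto
  have fin2: "finite {y \<in> V. (y, x) \<in> E}" using fin by simp
  have "card {a, b} \<le> card {y \<in> V. (y, x) \<in> E}" using ab fin2 by (intro card_mono) auto
  then have ge: "indeg V E x \<ge> 2" unfolding indeg_def using assms(5) by simp
  have "is_root V E x \<or> is_leaf V E x \<or> is_split V E x \<or> is_retic V E x" using pn assms(2) unfolding phylo_net_def by blast
  then show sp: "is_retic V E x" using ge unfolding is_root_def is_leaf_def is_split_def by auto
  show "{y \<in> V. (y, x) \<in> E} = {a, b}"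
    using card2_eq[OF fin2 _ ab assms(5)] sp unfolding is_retic_def indeg_def by simp
qed

lemma tstep: "tail_move X V E u v a b u' V' E' \<Longrightarrow> ((V, E), (V', E')) \<in> tail_step X"
  unfolding tail_step_def by blast

lemma finish:
  assumes "((V, E), (W, F)) \<in> tail_step X ^^ k" "k \<le> 4"
    and "phylo_net X V' E'" "inj_on f V'" "\<And>x. x \<in> X \<Longrightarrow> f x = x"
    and "W = f ` V'" "F = map_prod f f ` E'"
  shows "\<exists>k \<le> 4. \<exists>N''. ((V, E), N'') \<in> (tail_step X) ^^ k \<and> net_iso X N'' (V', E')"
proof -
  have "X \<subseteq> V'" "E' \<subseteq> V' \<times> V'" using assms(3) unfolding phylo_net_def by auto
  then have "net_iso X (W, F) (V', E')" using iso_rename[OF assms(4) assms(5)] assms(6,7) by simp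
  then show ?thesis using assms(1,2) by blast
qed

theorem mainTheorem7:
  fixes X V V' :: "'v set" and E E' :: "('v \<times> 'v) set"
  assumes "infinite (UNIV :: 'v set)"
    and "phylo_net X V E"
    and "head_move X V E u v x1 y1 x2 y2 v' V' E'"
    and "above E y1 x2" and "y1 \<noteq> x2"
    and "is_split V E x2"
  shows "\<exists>k \<le> 4. \<exists>N''. ((V, E), N'') \<in> (tail_step X) ^^ k \<and> net_iso X N'' (V', E')"
proof -
  note inf = assms(1) and pn = assms(2) and y1x2 = assms(5) and sx2 = assms(6)
  have uv: "(u, v) \<in> E" and rv: "is_retic V E v" and x1v: "(x1, v) \<in> E" and x1u: "x1 \<noteq> u"
    and vy1: "(v, y1) \<in> E" and x2y2: "(x2, y2) \<in> E" and x2y2uv: "(x2, y2) \<noteq> (u, v)" and nv': "v' \<notin> V"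
    and pn': "phylo_net X V' E'"
    using assms(3) unfolding head_move_def by blast+
  have "\<exists>E3. suppress (insert v' V) (subdivide (E - {(u, v)}) (x2, y2) v') v V' E3 \<and> E' = insert (u, v') E3"
    using assms(3) unfolding head_move_def by (elim conjE) assumption
  then obtain E3 where sp: "suppress (insert v' V) (subdivide (E - {(u, v)}) (x2, y2) v') v V' E3"
    and E'eq: "E' = insert (u, v') E3" by blast
  have EV: "E \<subseteq> V \<times> V" and fin: "finite V" and acE: "acyclic E" and XV: "X \<subseteq> V"
    using pn unfolding phylo_net_def by auto
  define r0 where "r0 = anc E"
  have rT: "(a, b) \<in> E\<^sup>+ \<Longrightarrow> r0 a < r0 b" for a b unfolding r0_def using anc_mono[OF fin EV acE] .
  have rE: "(a, b) \<in> E \<Longrightarrow> r0 a < r0 b" for a b using rT by blast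
  have inV: "(a, b) \<in> E \<Longrightarrow> a \<in> V \<and> b \<in> V" for a b using EV by auto
  have pv: "{y \<in> V. (y, v) \<in> E} = {u, x1}"
    using card2_eq[of "{y \<in> V. (y, v) \<in> E}" u x1] rv fin uv x1v x1u inV
    unfolding is_retic_def indeg_def by auto
  have sv: "{y \<in> V. (v, y) \<in> E} = {y1}"
    using card1_eq[of "{y \<in> V. (v, y) \<in> E}" y1] rv vy1 inV
    unfolding is_retic_def outdeg_def by auto
  have "card {y \<in> V. (y, x2) \<in> E} = 1" using sx2 unfolding is_split_def indeg_def by simp
  then obtain p2 where px2: "{y \<in> V. (y, x2) \<in> E} = {p2}" by (rule card_1_singletonE)
  obtain z where zy2: "z \<noteq> y2" and sx2': "{y \<in> V. (x2, y) \<in> E} = {y2, z}"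
    using card2_obtain[of "{y \<in> V. (x2, y) \<in> E}" y2] sx2 x2y2 inV unfolding is_split_def outdeg_def by auto
  have p2x2: "(p2, x2) \<in> E" and x2z: "(x2, z) \<in> E" using px2 sx2' by auto
  have y1p2: "(y1, p2) \<in> E\<^sup>*"
  proof -
    have "(y1, x2) \<in> E\<^sup>*" using assms(4) unfolding above_def .
    then obtain c where "(y1, c) \<in> E\<^sup>*" "(c, x2) \<in> E" using y1x2 by (auto elim: rtranclE)
    moreover then have "c = p2" using px2 inV by blast
    ultimately show ?thesis by simp
  qed
  have r_y1p2: "r0 y1 \<le> r0 p2"
    using y1p2 rT by (metis less_imp_le order_refl rtranclD)
  have ranks: "r0 x1 < r0 v" "r0 u < r0 v" "r0 v < r0 y1" "r0 p2 < r0 x2" "r0 x2 < r0 y2" "r0 x2 < r0 z" "r0 y1 \<le> r0 p2"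
    using rE x1v uv vy1 p2x2 x2y2 x2z r_y1p2 by auto
  define Es where "Es = subdivide (E - {(u, v)}) (x2, y2) v'"
  have Esiff: "(a, b) \<in> Es \<longleftrightarrow> ((a, b) \<in> E \<and> (a, b) \<noteq> (u, v) \<and> (a, b) \<noteq> (x2, y2)) \<or> (a, b) = (x2, v') \<or> (a, b) = (v', y2)" for a b
    unfolding Es_def subdivide_def by auto
  obtain a b where spa: "{y \<in> insert v' V. (y, v) \<in> Es} = {a}" and spb: "{y \<in> insert v' V. (v, y) \<in> Es} = {b}"
    and V'eq: "V' = insert v' V - {v}" and E3eq: "E3 = (Es - {(a, v), (v, b)}) \<union> {(a, b)}"
    using sp unfolding suppress_def Es_def by blast
  have "(x1, v) \<in> Es" unfolding Esiff using x1v x1u ranks by auto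
  moreover have "x1 \<in> V" using inV x1v by blast
  ultimately have "x1 \<in> {y \<in> insert v' V. (y, v) \<in> Es}" by simp
  then have "x1 \<in> {a}" by (simp only: spa)
  then have ax1: "a = x1" by simp
  have "(v, y1) \<in> Es" unfolding Esiff using vy1 ranks by auto
  moreover have "y1 \<in> V" using inV vy1 by blast
  ultimately have "y1 \<in> {y \<in> insert v' V. (v, y) \<in> Es}" by simp
  then have "y1 \<in> {b}" by (simp only: spb)
  then have by1: "b = y1" by simp
  have E'iff: "(c, d) \<in> E' \<longleftrightarrow> (c, d) = (u, v') \<or> (c, d) = (x1, y1) \<or> (c, d) = (x2, v') \<or> (c, d) = (v', y2) \<or>
     ((c, d) \<in> E \<and> (c, d) \<noteq> (u, v) \<and> (c, d) \<noteq> (x2, y2) \<and> (c, d) \<noteq> (x1, v) \<and> (c, d) \<noteq> (v, y1))" for c d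
    unfolding E'eq E3eq ax1 by1 Un_iff insert_iff singleton_iff Diff_iff Esiff using ranks by auto
  have finV: "finite (insert v' V)" using fin by simp
  obtain s where s: "s \<notin> insert v' V" using ex_new_if_finite[OF inf finV] by (elim exE)
  have "finite (insert s (insert v' V))" using finV by simp
  then obtain t where t: "t \<notin> insert s (insert v' V)" using ex_new_if_finite[OF inf] by metis
  have "finite (insert t (insert s (insert v' V)))" using finV by simp
  then obtain t2 where t2: "t2 \<notin> insert t (insert s (insert v' V))" using ex_new_if_finite[OF inf] by metis
  define f where "f = (\<lambda>x. if x = v' then v else if x = v then v' else x)"
  have injf: "inj_on f V'" unfolding f_def inj_on_def by simp
  have lv: "{x \<in> V. is_leaf V E x} = X" using pn unfolding phylo_net_def by (elim conjE)
  have fX: "x \<in> X \<Longrightarrow> f x = x" for x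
  proof -
    assume "x \<in> X"
    then have "is_leaf V E x" "x \<in> V" using lv by auto
    then have "x \<noteq> v" "x \<noteq> v'" using rv nv' unfolding is_retic_def is_leaf_def by auto
    then show "f x = x" unfolding f_def by simp
  qed
  have ff: "f (f x) = x" for x unfolding f_def by simp
  have mapiff: "(a, b) \<in> map_prod f f ` E' \<longleftrightarrow> (f a, f b) \<in> E'" for a b
  proof
    assume "(a, b) \<in> map_prod f f ` E'"
    then obtain c d where "(c, d) \<in> E'" "a = f c" "b = f d" by auto
    then show "(f a, f b) \<in> E'" using ff by simp
  next
    assume "(f a, f b) \<in> E'"
    then have "map_prod f f (f a, f b) \<in> map_prod f f ` E'" by (rule imageI)
    then show "(a, b) \<in> map_prod f f ` E'" using ff by simp
  qed
  have predv: "(c, v) \<in> E \<Longrightarrow> c = u \<or> c = x1" for c using pv inV by blast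
  have succv: "(v, d) \<in> E \<Longrightarrow> d = y1" for d using sv inV by blast
  have predx2: "(c, x2) \<in> E \<Longrightarrow> c = p2" for c using px2 inV by blast
  have succx2: "(x2, d) \<in> E \<Longrightarrow> d = y2 \<or> d = z" for d using sx2' inV by blast
  have nE: "(c, d) \<in> E \<Longrightarrow> c \<noteq> v' \<and> d \<noteq> v' \<and> c \<noteq> s \<and> d \<noteq> s \<and> c \<noteq> t \<and> d \<noteq> t \<and> c \<noteq> t2 \<and> d \<noteq> t2" for c d
    using inV s t t2 nv' by blast
  have fE: "(s, c) \<notin> E" "(c, s) \<notin> E" "(t, c) \<notin> E" "(c, t) \<notin> E" "(t2, c) \<notin> E" "(c, t2) \<notin> E"
    "(v', c) \<notin> E" "(c, v') \<notin> E" for c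
    using nE by blast+
  have uvE: "u \<in> V" "v \<in> V" "x1 \<in> V" "y1 \<in> V" "x2 \<in> V" "y2 \<in> V" "z \<in> V" "p2 \<in> V"
    using inV uv x1v vy1 x2y2 x2z p2x2 by blast+
  have fresh: "s \<notin> V" "t \<notin> V" "t2 \<notin> V" "s \<noteq> t" "s \<noteq> t2" "t \<noteq> t2" "v' \<noteq> s" "v' \<noteq> t" "v' \<noteq> t2"
    using s t t2 by auto
  have mapE': "map_prod f f ` E' = (E - {(x2, y2), (x1, v), (v, y1)}) \<union> {(x1, y1), (x2, v), (v, y2)}"
  proof -
    have "(a, b) \<in> map_prod f f ` E' \<longleftrightarrow> (a, b) \<in> (E - {(x2, y2), (x1, v), (v, y1)}) \<union> {(x1, y1), (x2, v), (v, y2)}" for a b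
      unfolding mapiff E'iff using uv ranks uvE nv' x1u
      by (auto simp: f_def dest: nE predv succv split: if_splits)
    then show ?thesis by (rule pair_set_eqI)
  qed
  have mapV': "f ` V' = V"
    unfolding V'eq f_def using uvE nv' by auto
  have pnf: "phylo_net X (f ` V') (map_prod f f ` E')" using phylo_rename[OF pn' injf fX] .
  define r where "r x = (if x = s then 3 * r0 v + 1 else if x = t then 3 * r0 x1 + 2
      else if x = t2 then 3 * r0 x1 + 1 else 3 * r0 x)" for x
  have rEv: "(a, b) \<in> E \<Longrightarrow> r a < r b" for a b
    using nE[of a b] rE[of a b] unfolding r_def by auto
  have dist: "u \<noteq> v" "x1 \<noteq> v" "v \<noteq> y1" "v \<noteq> p2" "v \<noteq> x2" "v \<noteq> y2" "v \<noteq> z" "x1 \<noteq> y1" "x1 \<noteq> p2"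
    "x1 \<noteq> x2" "x1 \<noteq> y2" "x1 \<noteq> z" "y1 \<noteq> y2" "y1 \<noteq> z" "p2 \<noteq> x2" "p2 \<noteq> y2" "p2 \<noteq> z" "x2 \<noteq> y2" "x2 \<noteq> z"
    "u \<noteq> y1" "u \<noteq> p2" "u \<noteq> x2" "u \<noteq> y2" "u \<noteq> z" "y1 \<noteq> x2"
    using ranks y1x2 by auto
  have D: "u \<noteq> v" "v \<noteq> u" "u \<noteq> x1" "x1 \<noteq> u" "u \<noteq> y1" "y1 \<noteq> u" "u \<noteq> p2" "p2 \<noteq> u" "u \<noteq> x2" "x2 \<noteq> u" "u \<noteq> y2" "y2 \<noteq> u" "u \<noteq> z" "z \<noteq> u" "v \<noteq> x1" "x1 \<noteq> v" "v \<noteq> y1" "y1 \<noteq> v" "v \<noteq> p2" "p2 \<noteq> v" "v \<noteq> x2" "x2 \<noteq> v" "v \<noteq> y2" "y2 \<noteq> v" "v \<noteq> z" "z \<noteq> v" "x1 \<noteq> y1" "y1 \<noteq> x1" "x1 \<noteq> p2" "p2 \<noteq> x1" "x1 \<noteq> x2" "x2 \<noteq> x1" "x1 \<noteq> y2" "y2 \<noteq> x1" "x1 \<noteq> z" "z \<noteq> x1" "y1 \<noteq> x2" "x2 \<noteq> y1" "y1 \<noteq> y2" "y2 \<noteq> y1" "y1 \<noteq> z" "z \<noteq> y1" "p2 \<noteq> x2" "x2 \<noteq> p2" "p2 \<noteq> y2" "y2 \<noteq> p2" "p2 \<noteq> z" "z \<noteq> p2" "x2 \<noteq> y2" "y2 \<noteq>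 x2" "x2 \<noteq> z" "z \<noteq> x2" "y2 \<noteq> z" "z \<noteq> y2" "u \<noteq> s" "s \<noteq> u" "u \<noteq> t" "t \<noteq> u" "u \<noteq> t2" "t2 \<noteq> u" "u \<noteq> v'" "v' \<noteq> u" "v \<noteq> s" "s \<noteq> v" "v \<noteq> t" "t \<noteq> v" "v \<noteq> t2" "t2 \<noteq> v" "v \<noteq> v'" "v' \<noteq> v" "x1 \<noteq> s" "s \<noteq> x1" "x1 \<noteq> t" "t \<noteq> x1" "x1 \<noteq> t2" "t2 \<noteq> x1" "x1 \<noteq> v'" "v' \<noteq> x1" "y1 \<noteq> s" "s \<noteq> y1" "y1 \<noteq> t" "t \<noteq> y1" "y1 \<noteq> t2" "t2 \<noteq> y1" "y1 \<noteq> v'" "v' \<noteq> y1" "p2 \<noteq> s" "s \<noteq> p2" "p2 \<noteq> t" "t \<noteq> p2" "p2 \<noteq> t2" "t2 \<noteq> p2" "p2 \<noteq> v'" "v' \<noteq> p2" "x2 \<noteq> s" "s \<noteq> x2" "x2 \<noteq> t" "t \<noteq> x2" "x2 \<noteq> t2" "t2 \<noteq> x2" "x2 \<noteq> v'" "v' \<noteq> x2" "y2 \<noteq> s" "s \<noteq> y2" "y2 \<noteq> t" "t \<noteq> y2" "y2 \<noteq> t2" "t2 \<noteq> y2" "y2 \<noteq> v'" "v' \<noteq> y2" "z \<noteq> s" "s \<noteq> z" "z \<noteq> t" "t \<noteq> z" "z \<noteq> t2" "t2 \<noteq> z" "z \<noteq> v'" "v' \<noteq> z" "s \<noteq> t"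 "t \<noteq> s" "s \<noteq> t2" "t2 \<noteq> s" "s \<noteq> v'" "v' \<noteq> s" "t \<noteq> t2" "t2 \<noteq> t" "t \<noteq> v'" "v' \<noteq> t" "t2 \<noteq> v'" "v' \<noteq> t2"
    using dist fresh uvE nv' x1u zy2 by (auto simp: fE)
  define f2 where "f2 = (\<lambda>x. if x = v' then v else if x = v then v' else if x = x2 then t else if x = t then x2 else x)"
  have ff2: "f2 (f2 x) = x" for x unfolding f2_def using D by auto
  have injf2: "inj_on f2 V'" by (metis ff2 inj_on_inverseI)
  have fX2: "x \<in> X \<Longrightarrow> f2 x = x" for x
  proof -
    assume "x \<in> X"
    then have "is_leaf V E x" "x \<in> V" using lv by auto
    then have "x \<noteq> v" "x \<noteq> v'" "x \<noteq> x2" "x \<noteq> t" using rv nv' sx2 fresh unfolding is_retic_def is_leaf_def is_split_def by auto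
    then show "f2 x = x" unfolding f2_def by simp
  qed
  have mapE'2: "map_prod f2 f2 ` E' = (E - {(x2, y2), (x1, v), (v, y1), (p2, x2), (x2, z)}) \<union> {(x1, y1), (t, v), (v, y2), (p2, t), (t, z)}"
  proof (rule pair_set_eqI)
    fix a b
    show "(a, b) \<in> map_prod f2 f2 ` E' \<longleftrightarrow> (a, b) \<in> (E - {(x2, y2), (x1, v), (v, y1), (p2, x2), (x2, z)}) \<union> {(x1, y1), (t, v), (v, y2), (p2, t), (t, z)}"
      unfolding inv_map_iff[OF ff2] E'iff using D
      by (auto simp: f2_def fE uv p2x2 x2z dest: predv succv predx2 succx2 split: if_splits)
  qed
  have mapV'2: "f2 ` V' = insert t V - {x2}"
    unfolding V'eq f2_def using uvE nv' D fresh by auto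
  have pnf2: "phylo_net X (f2 ` V') (map_prod f2 f2 ` E')" using phylo_rename[OF pn' injf2 fX2] .
  consider (I) "(p2, z) \<notin> E" | (II) "(p2, z) \<in> E" "p2 \<noteq> y1" | (III) "(p2, z) \<in> E" "p2 = y1" by blast
  then show ?thesis
  proof cases
    case I
    define V1 where "V1 = insert s V - {x2}"
    define E1 where "E1 = tmE E x2 y2 z p2 v y1 s"
    define V2 where "V2 = insert t V1 - {s}"
    define E2 where "E2 = tmE E1 s y1 y2 v x1 v t"
    define V3 where "V3 = insert x2 V2 - {t}"
    define E3' where "E3' = tmE E2 t v y1 x1 p2 z x2"
    define NW where "NW = {(p2, z), (v, s), (s, y1), (s, y2), (v, y2), (x1, t), (t, v), (t, y1)}"
    have rN: "(a, b) \<in> NW \<Longrightarrow> r a < r b" for a b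
      unfolding NW_def r_def using ranks fresh uvE by auto
    have sub1: "E1 \<subseteq> E \<union> NW" using tmE_sub[of E x2 y2 z p2 v y1 s] unfolding E1_def NW_def by blast
    have "E2 \<subseteq> E1 \<union> {(v, y2), (x1, t), (t, v), (t, y1)}" using tmE_sub[of E1 s y1 y2 v x1 v t] unfolding E2_def by blast
    then have sub2: "E2 \<subseteq> E \<union> NW" using sub1 by (rule sub_chain) (simp add: NW_def)
    have ac1: "acyclic E1" by (rule acyc_by[OF sub1 rEv rN])
    have ac2: "acyclic E2" by (rule acyc_by[OF sub2 rEv rN])
    have zy2': "y2 \<noteq> z" using zy2 by simp
    have m1: "tail_move X V E x2 y2 v y1 s V1 E1" and p1: "{y \<in> V1. (y, s) \<in> E1} = {v}"
      and s1: "{y \<in> V1. (s, y) \<in> E1} = {y1, y2}"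
      using TM[OF pn px2 sx2' zy2' vy1 _ _ _ I _ fresh(1) ac1[unfolded E1_def]] dist
      unfolding V1_def E1_def by auto
    have pn1: "phylo_net X V1 E1" using tm_pn[OF m1] .
    have x1vE1: "(x1, v) \<in> E1" unfolding E1_def tmE_def using x1v dist by auto
    have vy2E1: "(v, y2) \<notin> E1" unfolding E1_def tmE_def using dist fresh succv uvE by auto
    have tV1: "t \<notin> V1" unfolding V1_def using fresh by auto
    have m2: "tail_move X V1 E1 s y1 x1 v t V2 E2" and p2': "{y \<in> V2. (y, t) \<in> E2} = {x1}"
      and s2: "{y \<in> V2. (t, y) \<in> E2} = {v, y1}"
      using TM[OF pn1 p1 s1 dist(13) x1vE1 _ _ _ vy2E1 dist(3) tV1 ac2[unfolded E2_def]] fresh uvE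
      unfolding V2_def E2_def by auto
    have pn2: "phylo_net X V2 E2" using tm_pn[OF m2] .
    have p2zE2: "(p2, z) \<in> E2" unfolding E2_def E1_def tmE_def using dist fresh uvE zy2 by auto
    have x2V2: "x2 \<notin> V2" unfolding V2_def V1_def using fresh uvE by auto
    have V3eq: "V3 = f ` V'" unfolding mapV' V3_def V2_def V1_def using fresh uvE by auto
    have E3eq: "E3' = map_prod f f ` E'"
      unfolding mapE'
    proof (rule set_eqI)
      fix e
      define S where "S = {(p2, x2), (x2, z), (x2, y2), (v, y1), (x1, v), (p2, z), (v, s), (s, y1), (s, y2),
          (v, y2), (x1, t), (t, v), (t, y1), (x1, y1), (x2, v)}"
      show "e \<in> E3' \<longleftrightarrow> e \<in> (E - {(x2, y2), (x1, v), (v, y1)}) \<union> {(x1, y1), (x2, v), (v, y2)}"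
      proof (cases "e \<in> S")
        case False then show ?thesis unfolding E3'_def E2_def E1_def tmE_def S_def by simp
      next
        case True then show ?thesis unfolding S_def E3'_def E2_def E1_def tmE_def
          by (elim insertE emptyE) (simp_all add: D fE I p2x2 x2z x2y2 x1v vy1)
      qed
    qed
    have pn3: "phylo_net X V3 E3'" using pnf V3eq E3eq by simp
    have m3: "tail_move X V2 E2 t v p2 z x2 V3 E3'"
      using TM2[OF pn2 p2' s2 dist(3) p2zE2 _ _ _ x2V2 pn3[unfolded V3_def E3'_def]] fresh uvE
      unfolding V3_def E3'_def by auto
    have "((V, E), (V3, E3')) \<in> tail_step X ^^ 3"
      using tstep[OF m1] tstep[OF m2] tstep[OF m3]
      by (rule relpow3)
    then show ?thesis using finish[OF _ _ pn' injf fX V3eq E3eq] by simp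
  next
    case II
    have p2z: "(p2, z) \<in> E" and p2y1: "p2 \<noteq> y1" using II by auto
    have spp2: "is_split V E p2" and sp2: "{y \<in> V. (p2, y) \<in> E} = {x2, z}"
      using split_of_two[OF pn uvE(8) p2x2 p2z] D by auto
    have "card {y \<in> V. (y, p2) \<in> E} = 1" using spp2 unfolding is_split_def indeg_def by simp
    then obtain q2 where pq2: "{y \<in> V. (y, p2) \<in> E} = {q2}" by (rule card_1_singletonE)
    have q2p2: "(q2, p2) \<in> E" and q2V: "q2 \<in> V" using pq2 by auto
    have predp2: "(c, p2) \<in> E \<Longrightarrow> c = q2" for c using pq2 inV by blast
    have y1q2: "(y1, q2) \<in> E\<^sup>*"
    proof -
      obtain c where "(y1, c) \<in> E\<^sup>*" "(c, p2) \<in> E" using y1p2 p2y1 by (auto elim: rtranclE)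
      moreover then have "c = q2" using predp2 by blast
      ultimately show ?thesis by simp
    qed
    have rq2: "r0 y1 \<le> r0 q2" "r0 q2 < r0 p2"
      using y1q2 rT rE[OF q2p2] by (metis less_imp_le order_refl rtranclD)+
    have pz: "{y \<in> V. (y, z) \<in> E} = {p2, x2}"
      using retic_of_two[OF pn uvE(7) p2z x2z] D by auto
    have DQ: "q2 \<noteq> u" "u \<noteq> q2" "q2 \<noteq> v" "v \<noteq> q2" "q2 \<noteq> x1" "x1 \<noteq> q2" "q2 \<noteq> p2" "p2 \<noteq> q2" "q2 \<noteq> x2" "x2 \<noteq> q2" "q2 \<noteq> y2" "y2 \<noteq> q2" "q2 \<noteq> z" "z \<noteq> q2" "q2 \<noteq> s" "s \<noteq> q2" "q2 \<noteq> t" "t \<noteq> q2" "q2 \<noteq> t2" "t2 \<noteq> q2" "q2 \<noteq> v'" "v' \<noteq> q2"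
      using rq2 ranks q2V fresh nv' by auto
    have q2z: "(q2, z) \<notin> E" using pz DQ q2V by blast
    have vy2: "(v, y2) \<notin> E" using succv D by blast
    define V1 where "V1 = insert t V - {p2}"
    define E1 where "E1 = tmE E p2 x2 z q2 x1 v t"
    define V2 where "V2 = insert s V1 - {x2}"
    define E2 where "E2 = tmE E1 x2 y2 z t v y1 s"
    define V3 where "V3 = insert t2 V2 - {s}"
    define E3 where "E3 = tmE E2 s y1 y2 v x1 t t2"
    define V4 where "V4 = insert p2 V3 - {t2}"
    define E4 where "E4 = tmE E3 t2 t y1 x1 q2 z p2"
    define NW where "NW = {(q2, z), (x1, t), (t, v), (t, x2), (t, z), (v, s), (s, y1), (s, y2), (v, y2),
        (x1, t2), (t2, t), (t2, y1)}"
    have rN: "(a, b) \<in> NW \<Longrightarrow> r a < r b" for a b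
      unfolding NW_def r_def using ranks rq2 fresh uvE DQ by auto
    have sub1: "E1 \<subseteq> E \<union> NW" using tmE_sub[of E p2 x2 z q2 x1 v t] unfolding E1_def NW_def by blast
    have "E2 \<subseteq> E1 \<union> {(t, z), (v, s), (s, y1), (s, y2)}" using tmE_sub[of E1 x2 y2 z t v y1 s] unfolding E2_def by blast
    then have sub2: "E2 \<subseteq> E \<union> NW" using sub1 by (rule sub_chain) (simp add: NW_def)
    have "E3 \<subseteq> E2 \<union> {(v, y2), (x1, t2), (t2, t), (t2, y1)}" using tmE_sub[of E2 s y1 y2 v x1 t t2] unfolding E3_def by blast
    then have sub3: "E3 \<subseteq> E \<union> NW" using sub2 by (rule sub_chain) (simp add: NW_def)
    have ac1: "acyclic E1" by (rule acyc_by[OF sub1 rEv rN])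
    have ac2: "acyclic E2" by (rule acyc_by[OF sub2 rEv rN])
    have ac3: "acyclic E3" by (rule acyc_by[OF sub3 rEv rN])
    have m1: "tail_move X V E p2 x2 x1 v t V1 E1" and p1: "{y \<in> V1. (y, t) \<in> E1} = {x1}"
      and s1: "{y \<in> V1. (t, y) \<in> E1} = {v, x2}"
      using TM[OF pn pq2 sp2 _ x1v _ _ _ q2z _ fresh(2) ac1[unfolded E1_def]] D DQ
      unfolding V1_def E1_def by auto
    have pn1: "phylo_net X V1 E1" using tm_pn[OF m1] .
    have px21: "{y \<in> V1. (y, x2) \<in> E1} = {t}"
      unfolding V1_def E1_def tmE_def using D DQ fresh uvE by (auto simp: fE dest: predx2)
    have sx21: "{y \<in> V1. (x2, y) \<in> E1} = {y2, z}"
      unfolding V1_def E1_def tmE_def using D DQ fresh uvE x2z x2y2 by (auto simp: fE dest: succx2)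
    have vy1E1: "(v, y1) \<in> E1" unfolding E1_def tmE_def using D DQ vy1 by simp
    have tzE1: "(t, z) \<notin> E1" unfolding E1_def tmE_def using D DQ by (simp add: fE)
    have sV1: "s \<notin> V1" unfolding V1_def using D fresh by simp
    have zy2': "y2 \<noteq> z" using zy2 by simp
    have m2: "tail_move X V1 E1 x2 y2 v y1 s V2 E2" and p2': "{y \<in> V2. (y, s) \<in> E2} = {v}"
      and s2: "{y \<in> V2. (s, y) \<in> E2} = {y1, y2}"
      using TM[OF pn1 px21 sx21 zy2' vy1E1 _ _ _ tzE1 _ sV1 ac2[unfolded E2_def]] D DQ
      unfolding V2_def E2_def by auto
    have pn2: "phylo_net X V2 E2" using tm_pn[OF m2] .
    have x1tE2: "(x1, t) \<in> E2" unfolding E2_def E1_def tmE_def using D DQ by simp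
    have vy2E2: "(v, y2) \<notin> E2" unfolding E2_def E1_def tmE_def using D DQ vy2 by (simp add: fE)
    have t2V2: "t2 \<notin> V2" unfolding V2_def V1_def using D fresh by simp
    have m3: "tail_move X V2 E2 s y1 x1 t t2 V3 E3" and p3: "{y \<in> V3. (y, t2) \<in> E3} = {x1}"
      and s3: "{y \<in> V3. (t2, y) \<in> E3} = {t, y1}"
      using TM[OF pn2 p2' s2 _ x1tE2 _ _ _ vy2E2 _ t2V2 ac3[unfolded E3_def]] D DQ
      unfolding V3_def E3_def by auto
    have pn3: "phylo_net X V3 E3" using tm_pn[OF m3] .
    have q2zE3: "(q2, z) \<in> E3" unfolding E3_def E2_def E1_def tmE_def using D DQ by simp
    have p2V3: "p2 \<notin> V3" unfolding V3_def V2_def V1_def using D fresh by simp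
    have V4eq: "V4 = f2 ` V'" unfolding mapV'2 V4_def V3_def V2_def V1_def using fresh uvE D by auto
    have E4eq: "E4 = map_prod f2 f2 ` E'"
      unfolding mapE'2
    proof (rule set_eqI)
      fix e
      define S where "S = {(q2, p2), (p2, z), (p2, x2), (x1, v), (q2, z), (x1, t), (t, v), (t, x2), (x2, z), (x2, y2),
        (v, y1), (t, z), (v, s), (s, y1), (s, y2), (v, y2), (x1, t2), (t2, t), (t2, y1), (x1, y1), (p2, t)}"
      show "e \<in> E4 \<longleftrightarrow> e \<in> (E - {(x2, y2), (x1, v), (v, y1), (p2, x2), (x2, z)}) \<union> {(x1, y1), (t, v), (v, y2), (p2, t), (t, z)}"
      proof (cases "e \<in> S")
        case False then show ?thesis unfolding E4_def E3_def E2_def E1_def tmE_def S_def by simp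
      next
        case True then show ?thesis unfolding S_def E4_def E3_def E2_def E1_def tmE_def
          by (elim insertE emptyE) (simp_all add: D DQ fE q2p2 p2z p2x2 x1v q2z x2z x2y2 vy1 vy2)
      qed
    qed
    have pn4: "phylo_net X V4 E4" using pnf2 V4eq E4eq by simp
    have m4: "tail_move X V3 E3 t2 t q2 z p2 V4 E4"
      using TM2[OF pn3 p3 s3 _ q2zE3 _ _ _ p2V3 pn4[unfolded V4_def E4_def]] D DQ
      unfolding V4_def E4_def by auto
    have "((V, E), (V4, E4)) \<in> tail_step X ^^ 4"
      using tstep[OF m1] tstep[OF m2] tstep[OF m3] tstep[OF m4] by (rule relpow4)
    then show ?thesis using finish[OF _ _ pn' injf2 fX2 V4eq E4eq] by simp
  next
    case III
    have p2y1: "p2 = y1" using III by simp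
    have y1z: "(y1, z) \<in> E" and y1x2E: "(y1, x2) \<in> E" using III p2x2 by simp_all
    have spy1: "is_split V E y1" and sy1: "{y \<in> V. (y1, y) \<in> E} = {z, x2}"
      using split_of_two[OF pn uvE(4) y1z y1x2E] D by auto
    have py1: "{y \<in> V. (y, y1) \<in> E} = {v}"
      using card1_eq[of "{y \<in> V. (y, y1) \<in> E}" v] spy1 vy1 uvE unfolding is_split_def indeg_def by auto
    define V1 where "V1 = insert t V - {y1}"
    define E1 where "E1 = tmE E y1 z x2 v x1 v t"
    define V2 where "V2 = insert y1 V1 - {x2}"
    define E2 where "E2 = tmE E1 x2 z y2 v x1 t y1"
    define NW where "NW = {(v, x2), (x1, t), (t, v), (t, z)}"
    have rN: "(a, b) \<in> NW \<Longrightarrow> r a < r b" for a b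
      unfolding NW_def r_def using ranks fresh uvE by auto
    have sub1: "E1 \<subseteq> E \<union> NW" using tmE_sub[of E y1 z x2 v x1 v t] unfolding E1_def NW_def by blast
    have ac1: "acyclic E1" by (rule acyc_by[OF sub1 rEv rN])
    have vx2: "(v, x2) \<notin> E" using succv D by blast
    have m1: "tail_move X V E y1 z x1 v t V1 E1" and p1: "{y \<in> V1. (y, t) \<in> E1} = {x1}"
      and s1: "{y \<in> V1. (t, y) \<in> E1} = {v, z}"
      using TM[OF pn py1 sy1 _ x1v _ _ _ vx2 _ fresh(2) ac1[unfolded E1_def]] D
      unfolding V1_def E1_def by auto
    have pn1: "phylo_net X V1 E1" using tm_pn[OF m1] .
    have px21: "{y \<in> V1. (y, x2) \<in> E1} = {v}"
      unfolding V1_def E1_def tmE_def using D fresh uvE p2y1 by (auto simp: fE dest: predx2)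
    have sx21: "{y \<in> V1. (x2, y) \<in> E1} = {z, y2}"
      unfolding V1_def E1_def tmE_def using D fresh uvE x2z x2y2 by (auto simp: fE dest: succx2)
    have x1tE1: "(x1, t) \<in> E1" unfolding E1_def tmE_def by simp
    have y1V1: "y1 \<notin> V1" unfolding V1_def by simp
    have V2eq: "V2 = f2 ` V'" unfolding mapV'2 V2_def V1_def using fresh uvE D by auto
    have E2eq: "E2 = map_prod f2 f2 ` E'"
      unfolding mapE'2
    proof (rule set_eqI)
      fix e
      define S where "S = {(v, y1), (y1, z), (y1, x2), (x1, v), (v, x2), (x1, t), (t, v), (t, z), (x2, z), (x2, y2),
         (v, y2), (x1, y1), (y1, t), (p2, x2), (p2, t)}"
      show "e \<in> E2 \<longleftrightarrow> e \<in> (E - {(x2, y2), (x1, v), (v, y1), (p2, x2), (x2, z)}) \<union> {(x1, y1), (t, v), (v, y2), (p2, t), (t, z)}"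
      proof (cases "e \<in> S")
        case False then show ?thesis unfolding E2_def E1_def tmE_def S_def by simp
      next
        case True then show ?thesis unfolding S_def E2_def E1_def tmE_def p2y1
          by (elim insertE emptyE) (simp_all add: D fE y1z y1x2E x2z x2y2 x1v vy1 vx2)
      qed
    qed
    have pn2: "phylo_net X V2 E2" using pnf2 V2eq E2eq by simp
    have m2: "tail_move X V1 E1 x2 z x1 t y1 V2 E2"
      using TM2[OF pn1 px21 sx21 _ x1tE1 _ _ _ y1V1 pn2[unfolded V2_def E2_def]] D fresh
      unfolding V2_def E2_def by auto
    have "((V, E), (V2, E2)) \<in> tail_step X ^^ 2"
      using tstep[OF m1] tstep[OF m2] by (rule relpow2)
    then show ?thesis using finish[OF _ _ pn' injf2 fX2 V2eq E2eq] by simp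
  qed
qed

end
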